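(* A connected graph $G$ contains none of $P_5$, $C_4$, $C_5$, the claw, the bull as an induced subgraph if and only if $G$ is a co-chain graph.
   Context: All graphs are finite and simple. A graph $G$ is a co-chain graph if its vertex set can be partitioned into two cliques $X$ and $Y$ such that the vertices of $X$ can be ordered $x_1,\dots,x_{|X|}$ with $N[x_i]\subseteq N[x_j]$ for all $1\le i<j\le |X|$ (closed neighborhoods). $P_n$, $C_n$ denote the path and cycle on $n$ vertices; the claw is $K_{1,3}$; the bull is the $5$-vertex graph consisting of a triangle with two pendant edges attached at two distinct triangle vertices. *)

theory Defs
  imports Main
begin

definition graph :: "'a set \<Rightarrow> ('a \<Rightarrow> 'a \<Rightarrow> bool) \<Rightarrow> bool" where
  "graph V E \<longleftrightarrow> finite V \<and> (\<forall>x y. E x y \<longrightarrow> E y x) \<and> (\<forall>x. \<not> E x x)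
     \<and> (\<forall>x y. E x y \<longrightarrow> x \<in> V \<and> y \<in> V)"

definition connected_graph :: "'a set \<Rightarrow> ('a \<Rightarrow> 'a \<Rightarrow> bool) \<Rightarrow> bool" where
  "connected_graph V E \<longleftrightarrow> V \<noteq> {} \<and> (\<forall>x\<in>V. \<forall>y\<in>V. E\<^sup>*\<^sup>* x y)"

definition has_induced :: "'a set \<Rightarrow> ('a \<Rightarrow> 'a \<Rightarrow> bool) \<Rightarrow> nat \<Rightarrow> (nat \<Rightarrow> nat \<Rightarrow> bool) \<Rightarrow> bool" where
  "has_induced V E n F \<longleftrightarrow> (\<exists>f. inj_on f {..<n} \<and> f ` {..<n} \<subseteq> V \<and>
      (\<forall>i<n. \<forall>j<n. E (f i) (f j) \<longleftrightarrow> F i j))"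

definition P5_edge :: "nat \<Rightarrow> nat \<Rightarrow> bool" where
  "P5_edge i j \<longleftrightarrow> i = j + 1 \<or> j = i + 1"

definition C4_edge :: "nat \<Rightarrow> nat \<Rightarrow> bool" where
  "C4_edge i j \<longleftrightarrow> i = j + 1 \<or> j = i + 1 \<or> {i, j} = {0, 3}"

definition C5_edge :: "nat \<Rightarrow> nat \<Rightarrow> bool" where
  "C5_edge i j \<longleftrightarrow> i = j + 1 \<or> j = i + 1 \<or> {i, j} = {0, 4}"

definition claw_edge :: "nat \<Rightarrow> nat \<Rightarrow> bool" where
  "claw_edge i j \<longleftrightarrow> i \<noteq> j \<and> (i = 0 \<or> j = 0)"

definition bull_edge :: "nat \<Rightarrow> nat \<Rightarrow> bool" where
  "bull_edge i j \<longleftrightarrow> {i, j} = {0, 1} \<or> {i, j} = {1, 2} \<or> {i, j} = {0, 2}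
      \<or> {i, j} = {0, 3} \<or> {i, j} = {1, 4}"

definition closed_nbhd :: "'a set \<Rightarrow> ('a \<Rightarrow> 'a \<Rightarrow> bool) \<Rightarrow> 'a \<Rightarrow> 'a set" where
  "closed_nbhd V E x = insert x {y \<in> V. E x y}"

definition is_clique :: "('a \<Rightarrow> 'a \<Rightarrow> bool) \<Rightarrow> 'a set \<Rightarrow> bool" where
  "is_clique E S \<longleftrightarrow> (\<forall>x\<in>S. \<forall>y\<in>S. x \<noteq> y \<longrightarrow> E x y)"

definition co_chain :: "'a set \<Rightarrow> ('a \<Rightarrow> 'a \<Rightarrow> bool) \<Rightarrow> bool" where
  "co_chain V E \<longleftrightarrow> (\<exists>X Y. X \<union> Y = V \<and> X \<inter> Y = {} \<and> is_clique E X \<and> is_clique E Y \<and>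
     (\<exists>xs. distinct xs \<and> set xs = X \<and>
        (\<forall>i j. i < j \<and> j < length xs \<longrightarrow>
            closed_nbhd V E (xs ! i) \<subseteq> closed_nbhd V E (xs ! j))))"

end

theory Submission
  imports Defs
begin


lemma all5: "(\<forall>i<(5::nat). P i) \<longleftrightarrow> P 0 \<and> P 1 \<and> P 2 \<and> P 3 \<and> P 4"
  by (auto simp: less_Suc_eq numeral_eq_Suc)
lemma all4: "(\<forall>i<(4::nat). P i) \<longleftrightarrow> P 0 \<and> P 1 \<and> P 2 \<and> P 3"
  by (auto simp: less_Suc_eq numeral_eq_Suc)
lemma lt5: "{..<(5::nat)} = {0,1,2,3,4}" by (auto simp: less_Suc_eq numeral_eq_Suc)
lemma lt4: "{..<(4::nat)} = {0,1,2,3}" by (auto simp: less_Suc_eq numeral_eq_Suc)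

lemma mk5:
  assumes "distinct [a,b,c,d,e]" "set [a,b,c,d,e] \<subseteq> V"
    and "\<forall>i<5. \<forall>j<5. E ([a,b,c,d,e]!i) ([a,b,c,d,e]!j) \<longleftrightarrow> F i j"
  shows "has_induced V E 5 F"
  unfolding has_induced_def
  apply (rule exI[of _ "\<lambda>i. [a,b,c,d,e]!i"])
  using assms by (auto simp: lt5 inj_on_def)

lemma mk4:
  assumes "distinct [a,b,c,d]" "set [a,b,c,d] \<subseteq> V"
    and "\<forall>i<4. \<forall>j<4. E ([a,b,c,d]!i) ([a,b,c,d]!j) \<longleftrightarrow> F i j"
  shows "has_induced V E 4 F"
  unfolding has_induced_def
  apply (rule exI[of _ "\<lambda>i. [a,b,c,d]!i"])
  using assms by (auto simp: lt4 inj_on_def)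

lemma sym: "graph V E \<Longrightarrow> E x y \<Longrightarrow> E y x" by (simp add: graph_def)
lemma irr: "graph V E \<Longrightarrow> \<not> E x x" by (simp add: graph_def)

lemma mkP5:
  assumes g: "graph V E" and "a \<in> V" "b \<in> V" "c \<in> V" "d \<in> V" "e \<in> V"
   "E a b" "E b c" "E c d" "E d e" "\<not> E a c" "\<not> E a d" "\<not> E a e" "\<not> E b d" "\<not> E b e" "\<not> E c e"
  shows "has_induced V E 5 P5_edge"
proof -
  have s: "\<And>x y. E x y = E y x" using g by (metis sym)
  show ?thesis
  apply (rule mk5[of a b c d e])
  using assms irr[OF g] s by (auto simp: all5 P5_edge_def)
qed

lemma mkC5:
  assumes g: "graph V E" and "a \<in> V" "b \<in> V" "c \<in> V" "d \<in> V" "e \<in> V"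
   "E a b" "E b c" "E c d" "E d e" "\<not> E a c" "\<not> E a d" "E a e" "\<not> E b d" "\<not> E b e" "\<not> E c e"
  shows "has_induced V E 5 C5_edge"
proof -
  have s: "\<And>x y. E x y = E y x" using g by (metis sym)
  show ?thesis
  apply (rule mk5[of a b c d e])
  using assms irr[OF g] s by (auto simp: all5 C5_edge_def doubleton_eq_iff)
qed

lemma mkBull:
  assumes g: "graph V E" and "a \<in> V" "b \<in> V" "c \<in> V" "d \<in> V" "e \<in> V"
   "E a b" "E b c" "E a c" "E a d" "E b e" "\<not> E a e" "\<not> E b d" "\<not> E c d" "\<not> E c e" "\<not> E d e"
  shows "has_induced V E 5 bull_edge"
proof -
  have s: "\<And>x y. E x y = E y x" using g by (metis sym)
  show ?thesis
  apply (rule mk5[of a b c d e])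
  using assms irr[OF g] s by (auto simp: all5 bull_edge_def doubleton_eq_iff)
qed

lemma mkC4:
  assumes g: "graph V E" and "a \<in> V" "b \<in> V" "c \<in> V" "d \<in> V"
   "E a b" "E b c" "E c d" "E a d" "\<not> E a c" "\<not> E b d" "a \<noteq> c" "b \<noteq> d"
  shows "has_induced V E 4 C4_edge"
proof -
  have s: "\<And>x y. E x y = E y x" using g by (metis sym)
  show ?thesis
  apply (rule mk4[of a b c d])
  using assms irr[OF g] s by (auto simp: all4 C4_edge_def doubleton_eq_iff)
qed

lemma mkClaw:
  assumes g: "graph V E" and "a \<in> V" "b \<in> V" "c \<in> V" "d \<in> V"
   "E a b" "E a c" "E a d" "\<not> E b c" "\<not> E b d" "\<not> E c d" "b \<noteq> c" "b \<noteq> d" "c \<noteq> d"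
  shows "has_induced V E 4 claw_edge"
proof -
  have s: "\<And>x y. E x y = E y x" using g by (metis sym)
  show ?thesis
  apply (rule mk4[of a b c d])
  using assms irr[OF g] s by (auto simp: all4 claw_edge_def)
qed


definition indep3 where
  "indep3 V E a b c \<longleftrightarrow> a \<in> V \<and> b \<in> V \<and> c \<in> V \<and> a \<noteq> b \<and> a \<noteq> c \<and> b \<noteq> c
     \<and> \<not> E a b \<and> \<not> E a c \<and> \<not> E b c"

lemma claim2:
  assumes g: "graph V E" and nP5: "\<not> has_induced V E 5 P5_edge" and nC4: "\<not> has_induced V E 4 C4_edge"
    and ncl: "\<not> has_induced V E 4 claw_edge" and nb: "\<not> has_induced V E 5 bull_edge"
    and p: "E\<^sup>*\<^sup>* c w"
  shows "c \<in> V \<Longrightarrow> a \<in> V \<Longrightarrow> b \<in> V \<Longrightarrow> w \<in> V \<Longrightarrow> E a w \<Longrightarrow> E w b \<Longrightarrow> \<not> E a b \<Longrightarrow> a \<noteq> b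
     \<Longrightarrow> \<not> E c a \<Longrightarrow> \<not> E c w \<Longrightarrow> \<not> E c b \<Longrightarrow> False"
  using p
proof (induction rule: converse_rtranclp_induct)
  case base
  then show ?case using sym[OF g] by blast
next
  case (step y z)
  have s: "\<And>x y. E x y = E y x" using g by (metis sym)
  have irr': "\<And>x. \<not> E x x" using irr[OF g] .
  have zV: "z \<in> V" using step(1) g by (auto simp: graph_def)
  show ?case
  proof (cases "E z w")
    case True
    show ?thesis
    proof (cases "E z a")
      case za: True
      show ?thesis
      proof (cases "E z b")
        case True
        then show ?thesis using mkClaw[OF g zV \<open>y\<in>V\<close> \<open>a\<in>V\<close> \<open>b\<in>V\<close>] step za ncl s irr' by metis
      next
        case False
        \<comment> \<open>triangle z w a, pendant y on z, pendant b on w\<close>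
        then show ?thesis using mkBull[OF g zV \<open>w\<in>V\<close> \<open>a\<in>V\<close> \<open>y\<in>V\<close> \<open>b\<in>V\<close>] step za True nb s by metis
      qed
    next
      case za: False
      show ?thesis
      proof (cases "E z b")
        case True
        then show ?thesis using mkBull[OF g zV \<open>w\<in>V\<close> \<open>b\<in>V\<close> \<open>y\<in>V\<close> \<open>a\<in>V\<close>] step za \<open>E z w\<close> nb s by metis
      next
        case False
        then show ?thesis using mkClaw[OF g \<open>w\<in>V\<close> \<open>a\<in>V\<close> \<open>b\<in>V\<close> zV] step za \<open>E z w\<close> ncl s irr' by metis
      qed
    qed
  next
    case zw: False
    show ?thesis
    proof (cases "E z a")
      case za: True
      show ?thesis
      proof (cases "E z b")
        case True
        then show ?thesis using mkC4[OF g \<open>a\<in>V\<close> \<open>w\<in>V\<close> \<open>b\<in>V\<close> zV] step za zw nC4 s irr' by metis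
      next
        case False
        then show ?thesis using mkP5[OF g \<open>y\<in>V\<close> zV \<open>a\<in>V\<close> \<open>w\<in>V\<close> \<open>b\<in>V\<close>] step za zw nP5 s by metis
      qed
    next
      case za: False
      show ?thesis
      proof (cases "E z b")
        case True
        then show ?thesis using mkP5[OF g \<open>y\<in>V\<close> zV \<open>b\<in>V\<close> \<open>w\<in>V\<close> \<open>a\<in>V\<close>] step za zw nP5 s by metis
      next
        case False
        then show ?thesis using step.IH step zV za zw irr' by metis
      qed
    qed
  qed
qed

lemma claim1:
  assumes g: "graph V E" and p: "E\<^sup>*\<^sup>* a b"
  shows "indep3 V E a b c \<Longrightarrow> \<exists>a' b' c' w. indep3 V E a' b' c' \<and> w \<in> V \<and> E a' w \<and> E w b'"
  using p
proof (induction rule: converse_rtranclp_induct)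
  case base
  then show ?case by (simp add: indep3_def)
next
  case (step y z)
  have s: "\<And>x y. E x y = E y x" using g by (metis sym)
  have irr': "\<And>x. \<not> E x x" using irr[OF g] .
  have zV: "z \<in> V" using step(1) g by (auto simp: graph_def)
  show ?case
  proof (cases "E z b")
    case True
    then show ?thesis using step zV by blast
  next
    case nb: False
    show ?thesis
    proof (cases "E z c")
      case True
      have "indep3 V E y c b" using step.prems by (auto simp: indep3_def s)
      then show ?thesis using True step zV by blast
    next
      case False
      have "indep3 V E z b c" using step.prems step(1) nb False zV irr' by (auto simp: indep3_def s)
      then show ?thesis using step.IH by blast
    qed
  qed
qed

lemma no3:
  assumes g: "graph V E" and c: "connected_graph V E" and nP5: "\<not> has_induced V E 5 P5_edge" and nC4: "\<not> has_induced V E 4 C4_edge"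
    and ncl: "\<not> has_induced V E 4 claw_edge" and nb: "\<not> has_induced V E 5 bull_edge"
    and i: "indep3 V E a b c"
  shows False
proof -
  have s: "\<And>x y. E x y = E y x" using g by (metis sym)
  obtain a' b' c' w where i': "indep3 V E a' b' c'" and w: "w \<in> V" "E a' w" "E w b'"
    using claim1[OF g, of a b c] c i by (auto simp: connected_graph_def indep3_def)
  have cw: "\<not> E c' w" using mkClaw[OF g w(1), of a' b' c'] i' w ncl s by (auto simp: indep3_def)
  have "E\<^sup>*\<^sup>* c' w" using c i' w by (auto simp: connected_graph_def indep3_def)
  then show False using claim2[OF g nP5 nC4 ncl nb, of c' w a' b'] i' w cw s by (auto simp: indep3_def)
qed


lemma order_list:
  assumes fX: "finite X" and cmp: "\<forall>a\<in>X. \<forall>b\<in>X. N a \<subseteq> N b \<or> N b \<subseteq> N a"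
    and fN: "\<And>a. finite (N a)"
  shows "\<exists>xs. distinct xs \<and> set xs = X \<and> (\<forall>i j. i < j \<and> j < length xs \<longrightarrow> N (xs!i) \<subseteq> N (xs!j))"
proof -
  obtain ys where ys: "set ys = X" "distinct ys" using finite_distinct_list[OF fX] by blast
  define xs where "xs = sort_key (\<lambda>a. card (N a)) ys"
  have s: "sorted (map (\<lambda>a. card (N a)) xs)" unfolding xs_def by simp
  have "N (xs!i) \<subseteq> N (xs!j)" if "i < j" "j < length xs" for i j
  proof -
    have c: "card (N (xs!i)) \<le> card (N (xs!j))"
      using sorted_nth_mono[OF s, of i j] that by simp
    have "set xs = X" using ys by (simp add: xs_def)
    then have "xs!i \<in> X" "xs!j \<in> X" using that nth_mem[of i xs] nth_mem[of j xs] by auto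
    then have "N (xs!i) \<subseteq> N (xs!j) \<or> N (xs!j) \<subseteq> N (xs!i)" using cmp by blast
    then show ?thesis using c card_seteq[OF fN] by blast
  qed
  moreover have "distinct xs" "set xs = X" using ys by (auto simp: xs_def)
  ultimately show ?thesis by blast
qed

lemma construct:
  assumes g: "graph V E" and n3: "\<And>a b c. \<not> indep3 V E a b c"
    and nC4: "\<not> has_induced V E 4 C4_edge" and nC5: "\<not> has_induced V E 5 C5_edge"
  shows "co_chain V E"
proof -
  have s: "\<And>x y. E x y = E y x" using g by (metis sym)
  have irr': "\<And>x. \<not> E x x" using irr[OF g] .
  have fV: "finite V" using g by (simp add: graph_def)
  have EV: "\<And>x y. E x y \<Longrightarrow> x \<in> V \<and> y \<in> V" using g by (simp add: graph_def)
  define N where "N = closed_nbhd V E"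
  have fN: "\<And>a. finite (N a)" using fV by (simp add: N_def closed_nbhd_def)
  have cmp: "\<forall>a\<in>X. \<forall>b\<in>X. N a \<subseteq> N b \<or> N b \<subseteq> N a"
    if XY: "X \<union> Y = V" "X \<inter> Y = {}" "is_clique E X" "is_clique E Y" for X Y
  proof (intro ballI, rule ccontr)
    fix a b assume ab: "a \<in> X" "b \<in> X" and nc: "\<not> (N a \<subseteq> N b \<or> N b \<subseteq> N a)"
    then obtain y1 y2 where y1: "y1 \<in> N a" "y1 \<notin> N b" and y2: "y2 \<in> N b" "y2 \<notin> N a" by blast
    have "a \<noteq> b" using nc by auto
    then have Eab: "E a b" using XY ab by (auto simp: is_clique_def)
    have aV: "a \<in> V" "b \<in> V" using ab XY by auto
    have y1': "y1 \<noteq> a" "E a y1" "y1 \<in> V" "y1 \<noteq> b" "\<not> E b y1"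
      using y1 Eab aV by (auto simp: N_def closed_nbhd_def s)
    have y2': "y2 \<noteq> b" "E b y2" "y2 \<in> V" "y2 \<noteq> a" "\<not> E a y2"
      using y2 Eab aV by (auto simp: N_def closed_nbhd_def s)
    have "y1 \<notin> X" using y1' ab XY by (auto simp: is_clique_def)
    then have "y1 \<in> Y" using XY y1' by auto
    have "y2 \<notin> X" using y2' ab XY by (auto simp: is_clique_def)
    then have "y2 \<in> Y" using XY y2' by auto
    have "y1 \<noteq> y2" using y1 y2 by auto
    then have "E y1 y2" using \<open>y1 \<in> Y\<close> \<open>y2 \<in> Y\<close> XY by (auto simp: is_clique_def)
    have "has_induced V E 4 C4_edge"
      by (rule mkC4[OF g aV(1) y1'(3) y2'(3) aV(2)]) (use y1' y2' Eab \<open>E y1 y2\<close> in \<open>auto simp: s\<close>)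
    then show False using nC4 by simp
  qed
  have suff: "co_chain V E" if XY: "X \<union> Y = V" "X \<inter> Y = {}" "is_clique E X" "is_clique E Y" for X Y
  proof -
    have "finite X" using XY fV by (metis finite_Un)
    then obtain xs where "distinct xs \<and> set xs = X \<and> (\<forall>i j. i < j \<and> j < length xs \<longrightarrow> N (xs!i) \<subseteq> N (xs!j))"
      using order_list[OF _ cmp[OF XY] fN] by blast
    then show ?thesis unfolding co_chain_def N_def using XY by blast
  qed
  show ?thesis
  proof (cases "is_clique E V")
    case True
    then show ?thesis using suff[of "{}" V] by (auto simp: is_clique_def)
  next
    case False
    define gg where "gg u = card {y\<in>V. y \<noteq> u \<and> \<not> E u y}" for u
    have "V \<noteq> {}" using False by (auto simp: is_clique_def)
    have "Max (gg ` V) \<in> gg ` V" by (rule Max_in) (use fV \<open>V \<noteq> {}\<close> in auto)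
    then obtain u where uV: "u \<in> V" and um: "gg u = Max (gg ` V)" by auto
    have umax: "gg v \<le> gg u" if "v \<in> V" for v
      unfolding um by (rule Max_ge) (use fV that in auto)
    define Y where "Y = {y\<in>V. y \<noteq> u \<and> \<not> E u y}"
    define X where "X = V - Y"
    have fY: "finite Y" using fV by (simp add: Y_def)
    have ggu: "gg u = card Y" by (simp add: gg_def Y_def)
    have Xc: "x \<in> X \<longleftrightarrow> x \<in> V \<and> (x = u \<or> E u x)" for x by (auto simp: X_def Y_def)
    have Ycl: "is_clique E Y"
      unfolding is_clique_def
    proof (intro ballI impI, rule ccontr)
      fix y1 y2 assume "y1 \<in> Y" "y2 \<in> Y" "y1 \<noteq> y2" "\<not> E y1 y2"
      then have "indep3 V E u y1 y2" using uV by (auto simp: Y_def indep3_def)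
      then show False using n3 by blast
    qed
    have Xcl: "is_clique E X"
      unfolding is_clique_def
    proof (intro ballI impI, rule ccontr)
      fix x1 x2 assume x: "x1 \<in> X" "x2 \<in> X" "x1 \<noteq> x2" "\<not> E x1 x2"
      have "x1 \<in> V" "x1 = u \<or> E u x1" "x2 \<in> V" "x2 = u \<or> E u x2" using x Xc by auto
      then have x': "x1 \<in> V" "x2 \<in> V" "E u x1" "E u x2" "x1 \<noteq> u" "x2 \<noteq> u"
        using x irr' s by auto
      have x1notY: "x2 \<notin> Y" "x1 \<notin> Y" using x by (auto simp: X_def)
      have one: "E y x1 \<noteq> E y x2" if "y \<in> Y" for y
      proof
        assume eq: "E y x1 = E y x2"
        have y: "y \<in> V" "y \<noteq> u" "\<not> E u y" "y \<noteq> x1" "y \<noteq> x2" using that x' by (auto simp: Y_def)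
        show False
        proof (cases "E y x1")
          case True
          have "has_induced V E 4 C4_edge"
            by (rule mkC4[OF g uV x'(1) y(1) x'(2)]) (use True eq x x' y in \<open>auto simp: s\<close>)
          then show False using nC4 by simp
        next
          case False
          then have "indep3 V E y x1 x2" using eq x x' y by (auto simp: indep3_def s)
          then show False using n3 by blast
        qed
      qed
      have nonx: "gg x \<ge> card (insert x' Y)"
        if "x \<in> V" "x' \<in> V" "x \<noteq> x'" "\<not> E x x'" "\<forall>y\<in>Y. \<not> E y x" "x \<notin> Y" for x x'
      proof -
        have "insert x' Y \<subseteq> {y\<in>V. y \<noteq> x \<and> \<not> E x y}" using that by (auto simp: Y_def s)
        then show ?thesis unfolding gg_def by (intro card_mono) (use fV in auto)
      qed
      have "\<not> (\<forall>y\<in>Y. \<not> E y x1)"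
      proof
        assume "\<forall>y\<in>Y. \<not> E y x1"
        then have "gg x1 \<ge> card (insert x2 Y)" using nonx[of x1 x2] x x' x1notY by simp
        then show False using umax[OF x'(1)] ggu x1notY fY by simp
      qed
      then obtain ya where ya: "ya \<in> Y" "E ya x1" by blast
      have "\<not> (\<forall>y\<in>Y. \<not> E y x2)"
      proof
        assume "\<forall>y\<in>Y. \<not> E y x2"
        then have "gg x2 \<ge> card (insert x1 Y)" using nonx[of x2 x1] x x' x1notY s by simp
        then show False using umax[OF x'(2)] ggu x1notY fY by simp
      qed
      then obtain yb where yb: "yb \<in> Y" "E yb x2" by blast
      have "\<not> E ya x2" "\<not> E yb x1" using one ya yb by auto
      then have "ya \<noteq> yb" using ya yb by auto
      then have "E ya yb" using Ycl ya yb by (auto simp: is_clique_def)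
      have yaV: "ya \<in> V" "\<not> E u ya" "yb \<in> V" "\<not> E u yb" using ya yb by (auto simp: Y_def)
      have "has_induced V E 5 C5_edge"
        by (rule mkC5[OF g uV x'(1) yaV(1) yaV(3) x'(2)]) (use x x' ya yb yaV
          \<open>E ya yb\<close> \<open>\<not> E ya x2\<close> \<open>\<not> E yb x1\<close> in \<open>auto simp: s\<close>)
      then show False using nC5 by simp
    qed
    show ?thesis using suff[of X Y] Xcl Ycl by (auto simp: X_def Y_def)
  qed
qed


lemma cc_parts:
  assumes "co_chain V E"
  shows "\<exists>X Y. X \<union> Y = V \<and> X \<inter> Y = {} \<and> is_clique E X \<and> is_clique E Y \<and>
     (\<forall>a\<in>X. \<forall>b\<in>X. closed_nbhd V E a \<subseteq> closed_nbhd V E b \<or> closed_nbhd V E b \<subseteq> closed_nbhd V E a)"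
proof -
  obtain X Y xs where XY: "X \<union> Y = V" "X \<inter> Y = {}" "is_clique E X" "is_clique E Y"
    and xs: "distinct xs" "set xs = X" "\<forall>i j. i < j \<and> j < length xs \<longrightarrow>
            closed_nbhd V E (xs ! i) \<subseteq> closed_nbhd V E (xs ! j)"
    using assms unfolding co_chain_def by blast
  have "closed_nbhd V E a \<subseteq> closed_nbhd V E b \<or> closed_nbhd V E b \<subseteq> closed_nbhd V E a"
    if "a \<in> X" "b \<in> X" for a b
  proof -
    have "a \<in> set xs" using that xs(2) by simp
    then obtain i where i: "i < length xs" "a = xs!i" by (auto simp: in_set_conv_nth)
    have "b \<in> set xs" using that xs(2) by simp
    then obtain j where j: "j < length xs" "b = xs!j" by (auto simp: in_set_conv_nth)
    show ?thesis
    proof (cases i j rule: linorder_cases)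
      case less then show ?thesis using xs i j by blast
    next
      case equal then show ?thesis using i j by simp
    next
      case greater then show ?thesis using xs i j by blast
    qed
  qed
  then show ?thesis using XY by blast
qed

lemma bad_pair:
  assumes "closed_nbhd V E a \<subseteq> closed_nbhd V E b \<or> closed_nbhd V E b \<subseteq> closed_nbhd V E a"
    "E a d" "\<not> E b d" "d \<noteq> b" "E b c" "\<not> E a c" "c \<noteq> a" "c \<in> V" "d \<in> V"
  shows False
  using assms by (auto simp: closed_nbhd_def)

lemma fwd:
  assumes g: "graph V E" and cc: "co_chain V E"
  shows "\<not> has_induced V E 5 P5_edge \<and> \<not> has_induced V E 4 C4_edge \<and>
          \<not> has_induced V E 5 C5_edge \<and> \<not> has_induced V E 4 claw_edge \<and>
          \<not> has_induced V E 5 bull_edge"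
proof -
  have s: "\<And>x y. E x y = E y x" using g by (metis sym)
  obtain X Y where XY: "X \<union> Y = V" "X \<inter> Y = {}" "is_clique E X" "is_clique E Y"
    and cmp: "\<forall>a\<in>X. \<forall>b\<in>X. closed_nbhd V E a \<subseteq> closed_nbhd V E b \<or> closed_nbhd V E b \<subseteq> closed_nbhd V E a"
    using cc_parts[OF cc] by blast
  have diff: "(p \<in> X) \<noteq> (q \<in> X)" if "p \<in> V" "q \<in> V" "p \<noteq> q" "\<not> E p q" for p q
  proof
    assume eq: "(p \<in> X) = (q \<in> X)"
    show False
    proof (cases "p \<in> X")
      case True
      then have "q \<in> X" using eq by simp
      then show False using True XY(3) that unfolding is_clique_def by blast
    next
      case False
      then have "q \<notin> X" using eq by simp
      then have "p \<in> Y" "q \<in> Y" using False XY(1) that by auto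
      then show False using XY(4) that unfolding is_clique_def by blast
    qed
  qed
  have n3: False if "p \<in> V" "q \<in> V" "r \<in> V" "p \<noteq> q" "p \<noteq> r" "q \<noteq> r"
      "\<not> E p q" "\<not> E p r" "\<not> E q r" for p q r
  proof -
    have "(p \<in> X) \<noteq> (q \<in> X)" "(p \<in> X) \<noteq> (r \<in> X)" "(q \<in> X) \<noteq> (r \<in> X)"
      using diff[of p q] diff[of p r] diff[of q r] that by simp_all
    then show False by (cases "p \<in> X"; cases "q \<in> X"; simp)
  qed
  have get: "\<exists>f. (\<forall>i<n. f i \<in> V) \<and> (\<forall>i<n. \<forall>j<n. i \<noteq> j \<longrightarrow> f i \<noteq> f j) \<and>
      (\<forall>i<n. \<forall>j<n. E (f i) (f j) \<longleftrightarrow> F i j)" if hi: "has_induced V E n F" for n F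
  proof -
    obtain f where "inj_on f {..<n}" "f ` {..<n} \<subseteq> V" "\<forall>i<n. \<forall>j<n. E (f i) (f j) \<longleftrightarrow> F i j"
      using hi unfolding has_induced_def by blast
    then show ?thesis by (intro exI[of _ f]) (auto simp: inj_on_def)
  qed
  have P5: "\<not> has_induced V E 5 P5_edge"
  proof
    assume "has_induced V E 5 P5_edge"
    then obtain f where f: "\<forall>i<5. f i \<in> V" "\<forall>i<5. \<forall>j<5. i \<noteq> j \<longrightarrow> f i \<noteq> f j"
      "\<forall>i<5. \<forall>j<5. E (f i) (f j) \<longleftrightarrow> P5_edge i j" using get by blast
    show False by (rule n3[of "f 0" "f 2" "f 4"]) (use f in \<open>auto simp: P5_edge_def\<close>)
  qed
  have claw: "\<not> has_induced V E 4 claw_edge"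
  proof
    assume "has_induced V E 4 claw_edge"
    then obtain f where f: "\<forall>i<4. f i \<in> V" "\<forall>i<4. \<forall>j<4. i \<noteq> j \<longrightarrow> f i \<noteq> f j"
      "\<forall>i<4. \<forall>j<4. E (f i) (f j) \<longleftrightarrow> claw_edge i j" using get by blast
    show False by (rule n3[of "f 1" "f 2" "f 3"]) (use f in \<open>auto simp: claw_edge_def\<close>)
  qed
  have bull: "\<not> has_induced V E 5 bull_edge"
  proof
    assume "has_induced V E 5 bull_edge"
    then obtain f where f: "\<forall>i<5. f i \<in> V" "\<forall>i<5. \<forall>j<5. i \<noteq> j \<longrightarrow> f i \<noteq> f j"
      "\<forall>i<5. \<forall>j<5. E (f i) (f j) \<longleftrightarrow> bull_edge i j" using get by blast
    show False by (rule n3[of "f 2" "f 3" "f 4"]) (use f in \<open>auto simp: bull_edge_def doubleton_eq_iff\<close>)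
  qed
  have C5: "\<not> has_induced V E 5 C5_edge"
  proof
    assume "has_induced V E 5 C5_edge"
    then obtain f where f: "\<forall>i<5. f i \<in> V" "\<forall>i<5. \<forall>j<5. i \<noteq> j \<longrightarrow> f i \<noteq> f j"
      "\<forall>i<5. \<forall>j<5. E (f i) (f j) \<longleftrightarrow> C5_edge i j" using get by blast
    have V: "f 0 \<in> V" "f 1 \<in> V" "f 2 \<in> V" "f 3 \<in> V" "f 4 \<in> V" using f by auto
    have ne: "f 0 \<noteq> f 2" "f 0 \<noteq> f 3" "f 1 \<noteq> f 3" "f 1 \<noteq> f 4" "f 2 \<noteq> f 4" using f(2) by auto
    have nE: "\<not> E (f 0) (f 2)" "\<not> E (f 0) (f 3)" "\<not> E (f 1) (f 3)" "\<not> E (f 1) (f 4)" "\<not> E (f 2) (f 4)"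
      using f(3) by (auto simp: C5_edge_def doubleton_eq_iff)
    show False using diff[OF V(1) V(3) ne(1) nE(1)] diff[OF V(1) V(4) ne(2) nE(2)]
      diff[OF V(2) V(4) ne(3) nE(3)] diff[OF V(2) V(5) ne(4) nE(4)] diff[OF V(3) V(5) ne(5) nE(5)]
      by blast
  qed
  have C4: "\<not> has_induced V E 4 C4_edge"
  proof
    assume "has_induced V E 4 C4_edge"
    then obtain f where f: "\<forall>i<4. f i \<in> V" "\<forall>i<4. \<forall>j<4. i \<noteq> j \<longrightarrow> f i \<noteq> f j"
      "\<forall>i<4. \<forall>j<4. E (f i) (f j) \<longleftrightarrow> C4_edge i j" using get by blast
    define a b c d where "a = f 0" "b = f 1" "c = f 2" "d = f 3"
    have V: "a \<in> V" "b \<in> V" "c \<in> V" "d \<in> V" using f by (auto simp: a_b_c_d_def)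
    have ne: "a \<noteq> b" "a \<noteq> c" "a \<noteq> d" "b \<noteq> c" "b \<noteq> d" "c \<noteq> d" using f(2) by (auto simp: a_b_c_d_def)
    have Es: "E a b" "E b c" "E c d" "E d a" "\<not> E a c" "\<not> E b d"
      using f(3) by (auto simp: C4_edge_def doubleton_eq_iff a_b_c_d_def)
    have Es2: "E b a" "E c b" "E d c" "E a d" "\<not> E c a" "\<not> E d b" using Es s by auto
    have d1: "(a \<in> X) \<noteq> (c \<in> X)" "(b \<in> X) \<noteq> (d \<in> X)"
      using diff[OF V(1) V(3) ne(2) Es(5)] diff[OF V(2) V(4) ne(5) Es(6)] by auto
    have ab: "\<not> (a \<in> X \<and> b \<in> X)"
    proof
      assume "a \<in> X \<and> b \<in> X"
      then have "closed_nbhd V E a \<subseteq> closed_nbhd V E b \<or> closed_nbhd V E b \<subseteq> closed_nbhd V E a"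
        using cmp by blast
      then show False by (rule bad_pair[where d=d and c=c]) (use V ne Es Es2 in auto)
    qed
    have bc: "\<not> (b \<in> X \<and> c \<in> X)"
    proof
      assume "b \<in> X \<and> c \<in> X"
      then have "closed_nbhd V E b \<subseteq> closed_nbhd V E c \<or> closed_nbhd V E c \<subseteq> closed_nbhd V E b"
        using cmp by blast
      then show False by (rule bad_pair[where d=a and c=d]) (use V ne Es Es2 in auto)
    qed
    have cd: "\<not> (c \<in> X \<and> d \<in> X)"
    proof
      assume "c \<in> X \<and> d \<in> X"
      then have "closed_nbhd V E c \<subseteq> closed_nbhd V E d \<or> closed_nbhd V E d \<subseteq> closed_nbhd V E c"
        using cmp by blast
      then show False by (rule bad_pair[where d=b and c=a]) (use V ne Es Es2 in auto)
    qed
    have da: "\<not> (d \<in> X \<and> a \<in> X)"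
    proof
      assume "d \<in> X \<and> a \<in> X"
      then have "closed_nbhd V E d \<subseteq> closed_nbhd V E a \<or> closed_nbhd V E a \<subseteq> closed_nbhd V E d"
        using cmp by blast
      then show False by (rule bad_pair[where d=c and c=b]) (use V ne Es Es2 in auto)
    qed
    show False using d1 ab bc cd da by blast
  qed
  show ?thesis using P5 C4 C5 claw bull by blast
qed

theorem theorem16:
  fixes V :: "'a set" and E :: "'a \<Rightarrow> 'a \<Rightarrow> bool"
  assumes "graph V E" and "connected_graph V E"
  shows "(\<not> has_induced V E 5 P5_edge \<and> \<not> has_induced V E 4 C4_edge \<and>
          \<not> has_induced V E 5 C5_edge \<and> \<not> has_induced V E 4 claw_edge \<and>
          \<not> has_induced V E 5 bull_edge) \<longleftrightarrow> co_chain V E"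
proof
  assume h: "\<not> has_induced V E 5 P5_edge \<and> \<not> has_induced V E 4 C4_edge \<and>
          \<not> has_induced V E 5 C5_edge \<and> \<not> has_induced V E 4 claw_edge \<and>
          \<not> has_induced V E 5 bull_edge"
  have n3: "\<And>a b c. \<not> indep3 V E a b c"
    using no3[OF assms(1) assms(2)] h by blast
  show "co_chain V E" by (rule construct[OF assms(1) n3]) (use h in auto)
next
  assume "co_chain V E"
  then show "\<not> has_induced V E 5 P5_edge \<and> \<not> has_induced V E 4 C4_edge \<and>
          \<not> has_induced V E 5 C5_edge \<and> \<not> has_induced V E 4 claw_edge \<and>
          \<not> has_induced V E 5 bull_edge" using fwd[OF assms(1)] by blast
qed

end
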